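(* Let $\mathcal{L}$ be a nonempty set and let $\mathcal{C}: 2^{\mathcal{L}} \to 2^{\mathcal{L}}$ be a C-logics. Then there is a restricted fC-model $\langle \mathcal{M}, \models, f\rangle$ for $\mathcal{L}$ such that $\mathcal{C}(A) = \overline{f(\widehat{A})}$ for every $A \subseteq \mathcal{L}$.
   Context: A C-logics on a nonempty set $\mathcal{L}$ is a map $\mathcal{C}: 2^{\mathcal{L}} \to 2^{\mathcal{L}}$ satisfying Inclusion ($A \subseteq \mathcal{C}(A)$ for all $A$) and Cumulativity ($A \subseteq B \subseteq \mathcal{C}(A) \Rightarrow \mathcal{C}(A) = \mathcal{C}(B)$). An fC-model for $\mathcal{L}$ is a triple $\langle \mathcal{M}, \models, f\rangle$ where $\mathcal{M}$ is any set, $\models \subseteq \mathcal{M}\times\mathcal{L}$ is any binary relation, and $f: 2^{\mathcal{M}} \to 2^{\mathcal{M}}$ is defined on all subsets of $\mathcal{M}$ and satisfies, for all $X, Y \subseteq \mathcal{M}$: Contraction $f(X) \subseteq X$, and Local Cumulativity $f(X) \subseteq Y \subseteq X \Rightarrow f(Y) = f(X)$. It is restricted if moreover $f(X) = \emptyset \Rightarrow X = \emptyset$ for all $X \subseteq \mathcal{M}$. For $A \subseteq \mathcal{L}$, $\widehat{A} = \{x \in \mathcal{M} : x \models a \ \forall a \in A\}$; for $X \subseteq \mathcal{M}$, $\overline{X} = \{a \in \mathcal{L} : x \models a \ \forall x \in X\}$. *)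

theory Defs
  imports Main
begin

definition C_logic :: "'a set \<Rightarrow> ('a set \<Rightarrow> 'a set) \<Rightarrow> bool" where
  "C_logic L C \<longleftrightarrow>
     (\<forall>A. A \<subseteq> L \<longrightarrow> C A \<subseteq> L) \<and>
     (\<forall>A. A \<subseteq> L \<longrightarrow> A \<subseteq> C A) \<and>
     (\<forall>A B. A \<subseteq> L \<longrightarrow> B \<subseteq> L \<longrightarrow> A \<subseteq> B \<longrightarrow> B \<subseteq> C A \<longrightarrow> C A = C B)"

definition fC_model :: "'a set \<Rightarrow> 'm set \<Rightarrow> ('m \<Rightarrow> 'a \<Rightarrow> bool) \<Rightarrow> ('m set \<Rightarrow> 'm set) \<Rightarrow> bool" where
  "fC_model L M sat f \<longleftrightarrow>
     (\<forall>x a. sat x a \<longrightarrow> x \<in> M \<and> a \<in> L) \<and>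
     (\<forall>X. X \<subseteq> M \<longrightarrow> f X \<subseteq> X) \<and>
     (\<forall>X Y. X \<subseteq> M \<longrightarrow> Y \<subseteq> M \<longrightarrow> f X \<subseteq> Y \<longrightarrow> Y \<subseteq> X \<longrightarrow> f Y = f X)"

definition restricted_fC_model :: "'a set \<Rightarrow> 'm set \<Rightarrow> ('m \<Rightarrow> 'a \<Rightarrow> bool) \<Rightarrow> ('m set \<Rightarrow> 'm set) \<Rightarrow> bool" where
  "restricted_fC_model L M sat f \<longleftrightarrow>
     fC_model L M sat f \<and> (\<forall>X. X \<subseteq> M \<longrightarrow> f X = {} \<longrightarrow> X = {})"

text \<open>hat A = models of all formulas in A; bar X = formulas true in all models in X.\<close>
definition mods :: "'m set \<Rightarrow> ('m \<Rightarrow> 'a \<Rightarrow> bool) \<Rightarrow> 'a set \<Rightarrow> 'm set" where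
  "mods M sat A = {x \<in> M. \<forall>a\<in>A. sat x a}"

definition theory_of :: "'a set \<Rightarrow> ('m \<Rightarrow> 'a \<Rightarrow> bool) \<Rightarrow> 'm set \<Rightarrow> 'a set" where
  "theory_of L sat X = {a \<in> L. \<forall>x\<in>X. sat x a}"

end

theory Submission
  imports Defs
begin

theorem theorem2:
  fixes L :: "'a set" and C :: "'a set \<Rightarrow> 'a set"
  assumes "L \<noteq> {}" and "C_logic L C"
  shows "\<exists>(M :: 'a set set) sat f. restricted_fC_model L M sat f \<and>
           (\<forall>A. A \<subseteq> L \<longrightarrow> C A = theory_of L sat (f (mods M sat A)))"
proof -
  have D: "(\<forall>A. A \<subseteq> L \<longrightarrow> C A \<subseteq> L) \<and>
     (\<forall>A. A \<subseteq> L \<longrightarrow> A \<subseteq> C A) \<and>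
     (\<forall>A B. A \<subseteq> L \<longrightarrow> B \<subseteq> L \<longrightarrow> A \<subseteq> B \<longrightarrow> B \<subseteq> C A \<longrightarrow> C A = C B)"
    using assms(2) unfolding C_logic_def .
  have CL: "\<And>A. A \<subseteq> L \<Longrightarrow> C A \<subseteq> L" using D by (elim conjE) (erule allE, erule impE)
  have inc: "\<And>A. A \<subseteq> L \<Longrightarrow> A \<subseteq> C A" using D by (elim conjE) (erule allE, erule impE)
  have cum: "\<And>A B. A \<subseteq> L \<Longrightarrow> B \<subseteq> L \<Longrightarrow> A \<subseteq> B \<Longrightarrow> B \<subseteq> C A \<Longrightarrow> C A = C B"
    using D by (elim conjE) (erule allE, erule allE, erule impE, assumption, erule impE, assumption, erule impE, assumption, erule impE)
  define M where "M = Pow L"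
  define sat where "sat = (\<lambda>x a. x \<in> M \<and> a \<in> L \<and> a \<in> x)"
  define I where "I = (\<lambda>X::'a set set. L \<inter> \<Inter>X)"
  define f where "f = (\<lambda>X. if C (I X) \<in> X then {C (I X)} else X)"
  have c1: "\<forall>x a. sat x a \<longrightarrow> x \<in> M \<and> a \<in> L" unfolding sat_def by simp
  have c2: "\<forall>X. X \<subseteq> M \<longrightarrow> f X \<subseteq> X" unfolding f_def by simp
  have c3: "f Y = f X" if XM: "X \<subseteq> M" and YM: "Y \<subseteq> M" and fY: "f X \<subseteq> Y" and YX: "Y \<subseteq> X" for X Y
  proof (cases "C (I X) \<in> X")
    case True
    then have cy: "C (I X) \<in> Y" using fY unfolding f_def by simp
    have "I X \<subseteq> I Y" using YX unfolding I_def by blast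
    moreover have "I Y \<subseteq> C (I X)" using cy unfolding I_def by blast
    moreover have "I X \<subseteq> L" "I Y \<subseteq> L" unfolding I_def by blast+
    ultimately have "C (I X) = C (I Y)" using cum[of "I X" "I Y"] by blast
    then show ?thesis using cy True unfolding f_def by simp
  next
    case False
    then have "Y = X" using fY YX unfolding f_def by simp
    then show ?thesis by simp
  qed
  have fm: "fC_model L M sat f" unfolding fC_model_def using c1 c2 c3 by blast
  have "f X \<noteq> {}" if "X \<noteq> {}" for X unfolding f_def using that by simp
  then have "restricted_fC_model L M sat f"
    unfolding restricted_fC_model_def using fm by blast
  moreover have "\<forall>A. A \<subseteq> L \<longrightarrow> C A = theory_of L sat (f (mods M sat A))"
  proof (intro allI impI)
    fix A assume AL: "A \<subseteq> L"
    have md: "mods M sat A = {T. T \<subseteq> L \<and> A \<subseteq> T}"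
      unfolding mods_def sat_def M_def using AL by auto
    have "I (mods M sat A) = A" unfolding md I_def using AL by auto
    moreover have "C A \<in> mods M sat A" unfolding md using CL[OF AL] inc[OF AL] by auto
    ultimately have "f (mods M sat A) = {C A}" unfolding f_def by auto
    then show "C A = theory_of L sat (f (mods M sat A))" unfolding theory_of_def sat_def M_def using CL[OF AL] by auto
  qed
  ultimately show ?thesis by (intro exI[of _ M] exI[of _ sat] exI[of _ f]) (rule conjI)
qed

end
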